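(* Let $F$ be a countable subfield of $\mathbb{R}$, let $\mathcal R=\langle R,<,+,-,\times\rangle$ be an ordered real closed field containing $F$ as a subfield with the order of $\mathcal R$ agreeing with that of $F$, and let $h$ be an $F$-bijection of $\mathcal R$. Then the structure $h^{-1}[\mathcal R]$ is a model of $T[F]^*$.
   Context: An $F$-bijection of $\mathcal R$ is a map $h:R\to R$ that is an order-preserving bijection with $h(0)=0$, $h(1)=1$ and $h(ax)=ah(x)$ for all $x\in R$, $a\in F$. $h^{-1}[\mathcal R]$ is the structure with domain $R$ in which $0,1,+,<$ are interpreted as in $\mathcal R$, each $c_a$ ($a\in F$) is interpreted as $a$, and $\times$ is interpreted as $x\otimes y=h^{-1}(h(x)h(y))$. $T[F]^*$ is the theory in the language $\{0,1,+,\times,<\}\cup\{c_a:a\in F\}$ with axioms: (1) $0,+,<$ form an ordered abelian group; (2) the positive elements form a divisible ordered abelian group under $\times$ with identity $1$ and order $<$; (3a) $c_{a+b}=c_a+c_b$, (3b) $c_{ab}=c_a\times c_b$, (3c) $0<c_a$ for $a>0$; (4a) $c_{a+b}\times x=(c_a\times x)+(c_b\times x)$, (4b) $c_a\times(x+y)=(c_a\times x)+(c_a\times y)$, for all $a,b\in F$ and all $x,y$. *)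

theory Defs
  imports Complex_Main "HOL-Computational_Algebra.Polynomial" "HOL-Library.Countable_Set"
begin

definition real_closed :: "'a::linordered_field itself \<Rightarrow> bool" where
  "real_closed _ \<longleftrightarrow>
     (\<forall>x::'a. 0 \<le> x \<longrightarrow> (\<exists>y. y * y = x)) \<and>
     (\<forall>p::'a poly. odd (degree p) \<longrightarrow> (\<exists>x. poly p x = 0))"

definition subfield_of_reals :: "real set \<Rightarrow> bool" where
  "subfield_of_reals F \<longleftrightarrow> 0 \<in> F \<and> 1 \<in> F \<and>
     (\<forall>a\<in>F. \<forall>b\<in>F. a + b \<in> F \<and> a * b \<in> F) \<and>
     (\<forall>a\<in>F. - a \<in> F) \<and> (\<forall>a\<in>F. a \<noteq> 0 \<longrightarrow> inverse a \<in> F)"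

definition ordered_field_embedding :: "real set \<Rightarrow> (real \<Rightarrow> 'r::linordered_field) \<Rightarrow> bool" where
  "ordered_field_embedding F e \<longleftrightarrow> e 1 = 1 \<and>
     (\<forall>a\<in>F. \<forall>b\<in>F. e (a + b) = e a + e b \<and> e (a * b) = e a * e b \<and>
                     (a < b \<longleftrightarrow> e a < e b))"

text \<open>F-bijection of R (elements of F are identified with their images under e).\<close>
definition F_bijection :: "real set \<Rightarrow> (real \<Rightarrow> 'r::linordered_field) \<Rightarrow> ('r \<Rightarrow> 'r) \<Rightarrow> bool" where
  "F_bijection F e h \<longleftrightarrow> bij h \<and> strict_mono h \<and> h 0 = 0 \<and> h 1 = 1 \<and>
     (\<forall>x. \<forall>a\<in>F. h (e a * x) = e a * h x)"

text \<open>The structure h^{-1}[R]: multiplication x \<otimes> y = h^{-1}(h x * h y).\<close>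
definition pullback_times :: "('r::linordered_field \<Rightarrow> 'r) \<Rightarrow> 'r \<Rightarrow> 'r \<Rightarrow> 'r" where
  "pullback_times h x y = inv h (h x * h y)"

primrec tpow :: "('a \<Rightarrow> 'a \<Rightarrow> 'a) \<Rightarrow> 'a \<Rightarrow> 'a \<Rightarrow> nat \<Rightarrow> 'a" where
  "tpow m u x 0 = u"
| "tpow m u x (Suc n) = m x (tpow m u x n)"

definition model_TF_star ::
  "real set \<Rightarrow> 'a \<Rightarrow> 'a \<Rightarrow> ('a \<Rightarrow> 'a \<Rightarrow> 'a) \<Rightarrow> ('a \<Rightarrow> 'a \<Rightarrow> 'a) \<Rightarrow> ('a \<Rightarrow> 'a \<Rightarrow> bool)
     \<Rightarrow> (real \<Rightarrow> 'a) \<Rightarrow> bool" where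
  "model_TF_star F z0 o1 pl tm ls c \<longleftrightarrow>
     \<comment> \<open>(1) 0, +, < form an ordered abelian group\<close>
     (\<forall>x y z. pl (pl x y) z = pl x (pl y z)) \<and>
     (\<forall>x y. pl x y = pl y x) \<and>
     (\<forall>x. pl z0 x = x) \<and>
     (\<forall>x. \<exists>y. pl x y = z0) \<and>
     (\<forall>x. \<not> ls x x) \<and>
     (\<forall>x y z. ls x y \<longrightarrow> ls y z \<longrightarrow> ls x z) \<and>
     (\<forall>x y. ls x y \<or> x = y \<or> ls y x) \<and>
     (\<forall>x y z. ls x y \<longrightarrow> ls (pl x z) (pl y z)) \<and>
     \<comment> \<open>(2) positive elements form a divisible ordered abelian group under \<tm>, identity 1\<close>
     ls z0 o1 \<and>
     (\<forall>x y. ls z0 x \<longrightarrow> ls z0 y \<longrightarrow> ls z0 (tm x y)) \<and>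
     (\<forall>x y z. ls z0 x \<longrightarrow> ls z0 y \<longrightarrow> ls z0 z \<longrightarrow>
        tm (tm x y) z = tm x (tm y z)) \<and>
     (\<forall>x y. ls z0 x \<longrightarrow> ls z0 y \<longrightarrow> tm x y = tm y x) \<and>
     (\<forall>x. ls z0 x \<longrightarrow> tm o1 x = x) \<and>
     (\<forall>x. ls z0 x \<longrightarrow> (\<exists>y. ls z0 y \<and> tm x y = o1)) \<and>
     (\<forall>x y z. ls z0 x \<longrightarrow> ls z0 y \<longrightarrow> ls z0 z \<longrightarrow> ls x y \<longrightarrow>
        ls (tm x z) (tm y z)) \<and>
     (\<forall>n x. n \<ge> 1 \<longrightarrow> ls z0 x \<longrightarrow> (\<exists>y. ls z0 y \<and> tpow tm o1 y n = x)) \<and>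
     \<comment> \<open>(3a)-(3c)\<close>
     (\<forall>a\<in>F. \<forall>b\<in>F. c (a + b) = pl (c a) (c b)) \<and>
     (\<forall>a\<in>F. \<forall>b\<in>F. c (a * b) = tm (c a) (c b)) \<and>
     (\<forall>a\<in>F. a > 0 \<longrightarrow> ls z0 (c a)) \<and>
     \<comment> \<open>(4a), (4b)\<close>
     (\<forall>a\<in>F. \<forall>b\<in>F. \<forall>x. tm (c (a + b)) x = pl (tm (c a) x) (tm (c b) x)) \<and>
     (\<forall>a\<in>F. \<forall>x y. tm (c a) (pl x y) = pl (tm (c a) x) (tm (c a) y))"

end

theory Submission
  imports Defs
begin

lemma odd_root:
  fixes a :: "'r::linordered_field"
  assumes rc: "real_closed TYPE('r)" and m: "odd m" and a: "0 < a"
  shows "\<exists>y. 0 < y \<and> y ^ m = a"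
proof -
  let ?p = "monom (1::'r) m + [:-a:]"
  have m1: "m \<ge> 1" using m by (cases m) auto
  have "degree ?p = m"
    using m1 by (subst degree_add_eq_left) (auto simp: degree_monom_eq)
  then obtain y where "poly ?p y = 0" using rc m unfolding real_closed_def by metis
  then have ym: "y ^ m = a" by (simp add: poly_monom)
  have "0 < y"
  proof (rule ccontr)
    assume "\<not> 0 < y"
    then have "y ^ m \<le> 0" using m m1 by (auto simp add: power_le_zero_eq)
    then show False using ym a by simp
  qed
  then show ?thesis using ym by blast
qed

lemma pos_root:
  fixes x :: "'r::linordered_field"
  assumes rc: "real_closed TYPE('r)"
  shows "n \<ge> 1 \<Longrightarrow> 0 < x \<Longrightarrow> \<exists>y. 0 < y \<and> y ^ n = x"
proof (induction n arbitrary: x rule: less_induct)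
  case (less n)
  show ?case
  proof (cases "even n")
    case True
    then obtain k where k: "n = 2 * k" by blast
    with less.prems have k1: "k \<ge> 1" "k < n" by auto
    obtain s where s: "s * s = x" using rc less.prems unfolding real_closed_def by force
    have "\<bar>s\<bar> * \<bar>s\<bar> = x" using s by (simp add: abs_mult[symmetric])
    moreover have "\<bar>s\<bar> \<noteq> 0" using s less.prems by auto
    ultimately have "0 < \<bar>s\<bar>" "\<bar>s\<bar> * \<bar>s\<bar> = x" by auto
    then obtain y where y: "0 < y" "y ^ k = \<bar>s\<bar>" using less.IH[OF k1(2) k1(1)] by blast
    have "y ^ n = x" using y `\<bar>s\<bar> * \<bar>s\<bar> = x` k
      by (simp add: power_mult power2_eq_square mult.commute[of 2 k])
    then show ?thesis using y by blast
  next
    case False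
    then show ?thesis using odd_root[OF rc False less.prems(2)] by blast
  qed
qed

lemma tpow_eq:
  assumes "\<And>x. h (inv h x) = x" "h 1 = 1"
  shows "h (tpow (pullback_times h) 1 y n) = h y ^ n"
  using assms
  by (induction n) (auto simp: pullback_times_def)

theorem theorem9p2:
  fixes F :: "real set" and e :: "real \<Rightarrow> 'r::linordered_field" and h :: "'r \<Rightarrow> 'r"
  assumes "countable F" and "subfield_of_reals F"
    and "real_closed TYPE('r)"
    and "ordered_field_embedding F e"
    and "F_bijection F e h"
  shows "model_TF_star F 0 1 (+) (pullback_times h) (<) e"
proof -
  have bij: "bij h" and sm: "strict_mono h" and h0: "h 0 = 0" and h1: "h 1 = 1"
    and hF: "\<And>x a. a \<in> F \<Longrightarrow> h (e a * x) = e a * h x"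
    using assms(5) unfolding F_bijection_def by auto
  have e1: "e 1 = 1" and eadd: "\<And>a b. a \<in> F \<Longrightarrow> b \<in> F \<Longrightarrow> e (a + b) = e a + e b"
    and emul: "\<And>a b. a \<in> F \<Longrightarrow> b \<in> F \<Longrightarrow> e (a * b) = e a * e b"
    and eless: "\<And>a b. a \<in> F \<Longrightarrow> b \<in> F \<Longrightarrow> (a < b) = (e a < e b)"
    using assms(4) unfolding ordered_field_embedding_def by auto
  have F0: "0 \<in> F" and Fadd: "\<And>a b. a \<in> F \<Longrightarrow> b \<in> F \<Longrightarrow> a + b \<in> F"
    and Fmul: "\<And>a b. a \<in> F \<Longrightarrow> b \<in> F \<Longrightarrow> a * b \<in> F"
    using assms(2) unfolding subfield_of_reals_def by auto
  have e0: "e 0 = 0" using eadd[OF F0 F0] by simp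
  have hi: "\<And>x. inv h (h x) = x" using bij by (simp add: bij_is_inj inv_f_f)
  have ih: "\<And>x. h (inv h x) = x" using bij by (simp add: bij_is_surj surj_f_inv_f)
  have hinj: "\<And>x y. h x = h y \<longleftrightarrow> x = y" using bij by (metis hi)
  have hless: "\<And>x y. h x < h y \<longleftrightarrow> x < y" using sm by (simp add: strict_mono_less)
  have hpos: "\<And>x. 0 < h x \<longleftrightarrow> 0 < x" using hless[of 0] h0 by simp
  let ?tm = "pullback_times h"
  have htm: "\<And>x y. h (?tm x y) = h x * h y" by (simp add: pullback_times_def ih)
  have eq: "\<And>u v. h u = h v \<Longrightarrow> u = v" using hinj by blast
  have tme: "\<And>a x. a \<in> F \<Longrightarrow> ?tm (e a) x = e a * x"
  proof -
    fix a x assume a: "a \<in> F"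
    have "h (e a) = e a" using hF[OF a, of 1] h1 by simp
    then show "?tm (e a) x = e a * x" using hF[OF a, of x] htm by (intro eq[of "?tm (e a) x"]) (simp add: htm hF[OF a] `h (e a) = e a`)
  qed
  have ea: "\<And>a. a \<in> F \<Longrightarrow> h (e a) = e a" using hF[of _ 1] h1 by simp
  show ?thesis
    unfolding model_TF_star_def
  proof (intro conjI allI impI ballI)
    show "\<And>x y. 0 < x \<Longrightarrow> 0 < y \<Longrightarrow> 0 < ?tm x y"
      by (subst hpos[symmetric]) (simp add: htm hpos)
    show "\<And>x y z. 0 < x \<Longrightarrow> 0 < y \<Longrightarrow> 0 < z \<Longrightarrow> ?tm (?tm x y) z = ?tm x (?tm y z)"
      by (rule eq) (simp add: htm mult.assoc)
    show "\<And>x y. 0 < x \<Longrightarrow> 0 < y \<Longrightarrow> ?tm x y = ?tm y x"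
      by (rule eq) (simp add: htm mult.commute)
    show "\<And>x. 0 < x \<Longrightarrow> ?tm 1 x = x"
      by (rule eq) (simp add: htm h1)
    show "\<And>x. 0 < x \<Longrightarrow> \<exists>y. 0 < y \<and> ?tm x y = 1"
    proof -
      fix x :: 'r assume x: "0 < x"
      then have hx: "0 < h x" using hpos by simp
      let ?y = "inv h (inverse (h x))"
      have "0 < ?y" using hpos[of ?y] ih hx by simp
      moreover have "?tm x ?y = 1" by (rule eq) (use hx in \<open>simp add: htm ih h1\<close>)
      ultimately show "\<exists>y. 0 < y \<and> ?tm x y = 1" by blast
    qed
    show "\<And>x y z. 0 < x \<Longrightarrow> 0 < y \<Longrightarrow> 0 < z \<Longrightarrow> x < y \<Longrightarrow> ?tm x z < ?tm y z"
    proof -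
      fix x y z :: 'r assume "0 < x" "0 < y" "0 < z" "x < y"
      then have "h x * h z < h y * h z" using hless hpos by simp
      then show "?tm x z < ?tm y z" by (subst hless[symmetric]) (simp only: htm)
    qed
    show "\<And>n x. 1 \<le> n \<Longrightarrow> 0 < x \<Longrightarrow> \<exists>y. 0 < y \<and> tpow ?tm 1 y n = x"
    proof -
      fix n :: nat and x :: 'r assume n: "1 \<le> n" and x: "0 < x"
      obtain r where r: "0 < r" "r ^ n = h x" using pos_root[OF assms(3) n] x hpos by blast
      let ?y = "inv h r"
      have "0 < ?y" using hpos[of ?y] ih r by simp
      moreover have "tpow ?tm 1 ?y n = x"
        by (rule eq) (use n r in \<open>simp add: tpow_eq[OF ih h1] ih\<close>)
      ultimately show "\<exists>y. 0 < y \<and> tpow ?tm 1 y n = x" by blast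
    qed
    show "\<And>a b. a \<in> F \<Longrightarrow> b \<in> F \<Longrightarrow> e (a + b) = e a + e b" by (rule eadd)
    show "\<And>a b. a \<in> F \<Longrightarrow> b \<in> F \<Longrightarrow> e (a * b) = ?tm (e a) (e b)"
      by (simp add: tme emul)
    show "\<And>a. a \<in> F \<Longrightarrow> 0 < a \<Longrightarrow> 0 < e a" using eless[OF F0] e0 by simp
    show "\<And>a b x. a \<in> F \<Longrightarrow> b \<in> F \<Longrightarrow> ?tm (e (a + b)) x = ?tm (e a) x + ?tm (e b) x"
      by (simp add: tme Fadd) (simp add: eadd distrib_right)
    show "\<And>a x y. a \<in> F \<Longrightarrow> ?tm (e a) (x + y) = ?tm (e a) x + ?tm (e a) y"
      by (simp add: tme distrib_left)
  qed (auto simp: add.commute intro: exI[of _ "- _"])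
qed

end
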